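(* Let $l>0$ and $(a,M)\in\mathcal B_l$. Let $(\omega,m)\in\mathcal{SF}$. Then $\mathcal T(\omega,m,\cdot)\in C^\infty(r_+,\bar r_+)$, and $\mathcal T(\omega,m,\cdot)$ has a unique critical point $r_{crit}(\omega,m)\in(r_+,\bar r_+)$ (i.e. a unique point where $\frac{d\mathcal T}{dr}=0$), which is a minimum. Moreover $r_{crit}(\omega,m)=r_s(\omega,m)$, where $r_s\in(r_+,\bar r_+)$ is the (unique) value with $\omega=\frac{am\Xi}{r_s^2+a^2}$, and $$\Big|\frac{d^2\mathcal T}{dr^2}(\omega,m,r_{crit})\Big|>0 .$$
   Context: Fix $l>0$. For $a\in\mathbb R$, $M>0$ set $\Delta(r)=(r^2+a^2)\big(1-\frac{r^2}{l^2}\big)-2Mr$. We write $(a,M)\in\mathcal B_l$ (subextremal) if $\Delta$ has four distinct real roots $\bar r_-<0\le r_-<r_+<\bar r_+$. Set $\Xi=1+\frac{a^2}{l^2}$, $\omega_+=\frac{a\Xi}{r_+^2+a^2}$, $\bar\omega_+=\frac{a\Xi}{\bar r_+^2+a^2}$. The superradiant set is $\mathcal{SF}=\{(\omega,m)\in\mathbb R\times\mathbb Z:\ (\omega-m\omega_+)(\omega-m\bar\omega_+)<0\}$ (equivalently $am\omega\in(\frac{a^2m^2\Xi}{\bar r_+^2+a^2},\frac{a^2m^2\Xi}{r_+^2+a^2})$). For $(\omega,m)\in\mathbb R\times\mathbb Z$ and $r\in(r_+,\bar r_+)$ define $$\mathcal T(\omega,m,r)=\frac{(r^2+a^2)^2}{\Delta(r)}\Big(\omega-\frac{am\Xi}{r^2+a^2}\Big)^2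 .$$ *)

theory Defs
  imports "HOL-Analysis.Analysis"
begin

definition Delta :: "real \<Rightarrow> real \<Rightarrow> real \<Rightarrow> real \<Rightarrow> real" where
  "Delta l a M r = (r^2 + a^2) * (1 - r^2 / l^2) - 2 * M * r"

definition subextremal_roots ::
  "real \<Rightarrow> real \<Rightarrow> real \<Rightarrow> real \<Rightarrow> real \<Rightarrow> real \<Rightarrow> real \<Rightarrow> bool" where
  "subextremal_roots l a M rbm rm rp rbp \<longleftrightarrow>
     rbm < 0 \<and> 0 \<le> rm \<and> rm < rp \<and> rp < rbp \<and>
     {r. Delta l a M r = 0} = {rbm, rm, rp, rbp}"

definition Xi :: "real \<Rightarrow> real \<Rightarrow> real" where
  "Xi l a = 1 + a^2 / l^2"

definition superradiant ::
  "real \<Rightarrow> real \<Rightarrow> real \<Rightarrow> real \<Rightarrow> real \<Rightarrow> int \<Rightarrow> bool" where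
  "superradiant l a rp rbp \<omega> m \<longleftrightarrow>
     (\<omega> - real_of_int m * (a * Xi l a / (rp^2 + a^2))) *
     (\<omega> - real_of_int m * (a * Xi l a / (rbp^2 + a^2))) < 0"

definition TT :: "real \<Rightarrow> real \<Rightarrow> real \<Rightarrow> real \<Rightarrow> int \<Rightarrow> real \<Rightarrow> real" where
  "TT l a M \<omega> m r =
     (r^2 + a^2)^2 / Delta l a M r * (\<omega> - a * real_of_int m * Xi l a / (r^2 + a^2))^2"

definition smooth_on :: "real set \<Rightarrow> (real \<Rightarrow> real) \<Rightarrow> bool" where
  "smooth_on S f \<longleftrightarrow> (\<forall>k. \<forall>x\<in>S. ((deriv ^^ k) f) differentiable (at x))"

end

theory Submission
  imports Defs "HOL-Computational_Algebra.Polynomial"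
begin


lemma Delta_factor:
  fixes l a M r1 r2 r3 r4 :: real
  assumes l: "l > 0" and o: "r1 < r2" "r2 < r3" "r3 < r4"
    and z: "Delta l a M r1 = 0" "Delta l a M r2 = 0" "Delta l a M r3 = 0" "Delta l a M r4 = 0"
  shows "Delta l a M x = (x-r1)*(x-r2)*(x-r3)*(r4-x)/l^2"
proof -
  define e1 where "e1 = r1+r2+r3+r4"
  define e2 where "e2 = r1*r2+r1*r3+r1*r4+r2*r3+r2*r4+r3*r4"
  define e3 where "e3 = r1*r2*r3+r1*r2*r4+r1*r3*r4+r2*r3*r4"
  define e4 where "e4 = r1*r2*r3*r4"
  define il where "il = 1/l^2"
  define R where "R = [:a^2 + e4*il, -2*M - e3*il, 1 - a^2*il + e2*il, -e1*il:]"
  have dd: "Delta l a M y = (y^2+a^2)*(1 - y^2*il) - 2*M*y" for y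
    unfolding Delta_def il_def by simp
  have pR0: "poly R y = Delta l a M y - (y-r1)*(y-r2)*(y-r3)*(r4-y)*il" for y
    unfolding R_def dd e1_def e2_def e3_def e4_def by simp algebra
  have pR: "poly R y = Delta l a M y - (y-r1)*(y-r2)*(y-r3)*(r4-y)/l^2" for y
    unfolding pR0 il_def by simp
  have dR: "degree R \<le> 3" unfolding R_def
    by (rule order.trans[OF degree_pCons_le]) (auto intro!: order.trans[OF degree_pCons_le])
  have "R = 0"
  proof (rule poly_eqI_degree[where A="{r1,r2,r3,r4}"])
    fix y assume "y \<in> {r1,r2,r3,r4}" then show "poly R y = poly 0 y"
      using z by (auto simp: pR)
  next
    show "degree R < card {r1,r2,r3,r4}" using dR o by auto
  next
    show "degree 0 < card {r1,r2,r3,r4}" using o by auto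
  qed
  then have "poly R x = 0" by simp
  then show ?thesis by (simp add: pR)
qed

lemma kpos:
  fixes r1 r2 r3 r4 r s :: real
  assumes "r1 < 0" "0 \<le> r2" "r2 < r3" "r3 < r" "r < r4" "r3^2 \<le> s" "s \<le> r4^2"
  defines "A \<equiv> r - r1" and "B \<equiv> r - r2" and "C \<equiv> r - r3" and "D \<equiv> r4 - r"
  shows "4*r*(A*B*C*D) - (r^2-s)*(B*C*D + A*C*D + A*B*D - A*B*C) > 0"
proof -
  have A: "A > r" "r > 0" using assms by auto
  have B: "B \<ge> C" "C > 0" "C < r" "D > 0" using assms by auto
  have Bp: "B > 0" using B by linarith
  have Ap: "A > 0" using A by linarith
  define q' where "q' = B*C*D + A*C*D + A*B*D - A*B*C"
  define K where "K = (\<lambda>s. 4*r*(A*B*C*D) - (r^2-s)*q')"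
  have K3: "K (r3^2) > 0"
  proof -
    have e: "K (r3^2) = C * (D*(A*B*(3*r-r3) - (r^2-r3^2)*(A+B)) + (r+r3)*A*B*C)"
      unfolding K_def q'_def C_def by (simp add: algebra_simps power2_eq_square)
    have u: "r^2 - r3^2 = (r+r3)*C" unfolding C_def by (simp add: algebra_simps power2_eq_square)
    have r3p: "r + r3 > 0" using assms(2,3,4) by linarith
    have u0: "r^2 - r3^2 \<ge> 0" unfolding u using r3p B(2) by simp
    have X: "0 \<le> (r+r3)*A" using A r3p by (intro mult_nonneg_nonneg) auto
    have X2: "C*((r+r3)*A) \<le> B*((r+r3)*A)" by (rule mult_right_mono[OF B(1) X])
    have i1: "(r^2-r3^2)*A \<le> (r+r3)*A*B" unfolding u
      using X2 by (simp add: algebra_simps)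
    have i2: "r*((r^2-r3^2)*B) \<le> A*((r^2-r3^2)*B)" using A u0 Bp
      by (intro mult_right_mono) auto
    have "r*(A*B*(3*r-r3) - (r^2-r3^2)*(A+B)) \<ge> A*B*(r-r3)^2"
    proof -
      have "r*(A*B*(3*r-r3) - (r^2-r3^2)*(A+B)) = r*A*B*(3*r-r3) - r*((r^2-r3^2)*A) - r*((r^2-r3^2)*B)"
        by (simp add: algebra_simps)
      also have "\<dots> \<ge> r*A*B*(3*r-r3) - r*((r+r3)*A*B) - A*((r^2-r3^2)*B)"
        using i2 mult_left_mono[OF i1, of r] A by linarith
      also have "r*A*B*(3*r-r3) - r*((r+r3)*A*B) - A*((r^2-r3^2)*B) = A*B*(r-r3)^2"
        by (simp add: algebra_simps power2_eq_square)
      finally show ?thesis .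
    qed
    moreover have "A*B*(r-r3)^2 \<ge> 0" using Ap Bp by simp
    ultimately have "r*(A*B*(3*r-r3) - (r^2-r3^2)*(A+B)) \<ge> 0" by linarith
    then have "A*B*(3*r-r3) - (r^2-r3^2)*(A+B) \<ge> 0" using A(2)
      by (simp add: zero_le_mult_iff)
    then have "D*(A*B*(3*r-r3) - (r^2-r3^2)*(A+B)) \<ge> 0" using B by simp
    moreover have "(r+r3)*A*B*C > 0" using Ap Bp B(2) r3p by (intro mult_pos_pos) auto
    ultimately show ?thesis unfolding e using B by simp
  qed
  have K4: "K (r4^2) > 0"
  proof -
    have e: "K (r4^2) = D * (A*B*C*(3*r-r4) + (r4^2-r^2)*(B*C+A*C+A*B))"
      unfolding K_def q'_def D_def by (simp add: algebra_simps power2_eq_square)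
    have u0: "r4^2 - r^2 > 0" using assms A by (simp add: power_strict_mono)
    have i1: "C*(A*B*(r4^2-r^2)) \<le> r*(A*B*(r4^2-r^2))" using B Ap Bp u0
      by (intro mult_right_mono) auto
    have i3: "(r4^2-r^2)*(B*C+A*C) \<ge> 0" using Ap Bp B u0 by simp
    have G: "r*(A*B*C*(3*r-r4) + (r4^2-r^2)*(B*C+A*C+A*B)) \<ge> A*B*C*(2*r^2 - r*r4 + r4^2)"
    proof -
      have "r*(A*B*C*(3*r-r4) + (r4^2-r^2)*(B*C+A*C+A*B)) = r*A*B*C*(3*r-r4) + r*((r4^2-r^2)*(B*C+A*C)) + r*(A*B*(r4^2-r^2))"
        by (simp add: algebra_simps)
      also have "\<dots> \<ge> r*A*B*C*(3*r-r4) + C*(A*B*(r4^2-r^2))"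
        using i1 i3 A by (simp add: add_increasing)
      also have "r*A*B*C*(3*r-r4) + C*(A*B*(r4^2-r^2)) = A*B*C*(2*r^2 - r*r4 + r4^2)"
        by (simp add: algebra_simps power2_eq_square)
      finally show ?thesis .
    qed
    have "2*r^2 - r*r4 + r4^2 > 0"
    proof -
      have "2*r^2 - r*r4 + r4^2 = (r - r4/2)^2 + r^2 + 3/4*r4^2" by (simp add: algebra_simps power2_eq_square)
      moreover have "r^2 > 0" using A by simp
      moreover have "(r - r4/2)^2 \<ge> 0" "r4^2 \<ge> 0" by simp_all
      ultimately show ?thesis by linarith
    qed
    moreover have "A*B*C > 0" using Ap Bp B(2) by simp
    ultimately have "A*B*C*(2*r^2 - r*r4 + r4^2) > 0" by simp
    then have "r*(A*B*C*(3*r-r4) + (r4^2-r^2)*(B*C+A*C+A*B)) > 0" using G by linarith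
    then have "A*B*C*(3*r-r4) + (r4^2-r^2)*(B*C+A*C+A*B) > 0" using A
      by (simp add: zero_less_mult_iff)
    then show ?thesis unfolding e using B by simp
  qed
  have lin: "K s = K (r3^2) + (s - r3^2) * q'" "K s = K (r4^2) + (s - r4^2) * q'"
    unfolding K_def by (simp_all add: algebra_simps)
  have "K s > 0"
  proof (cases "q' \<ge> 0")
    case True
    then have "(s - r3^2) * q' \<ge> 0" using assms by simp
    then show ?thesis using lin K3 by linarith
  next
    case False
    then have "(s - r4^2) * q' \<ge> 0" using assms by (simp add: mult_nonpos_nonpos)
    then show ?thesis using lin K4 by linarith
  qed
  then show ?thesis unfolding K_def q'_def .
qed



lemma rat_deriv:
  fixes P D :: "real poly"
  assumes "poly D x \<noteq> 0"
  shows "((\<lambda>y. poly P y / poly D y ^ n) has_real_derivative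
     poly (pderiv P * D - smult (of_nat n) (P * pderiv D)) x / poly D x ^ Suc n) (at x)"
proof -
  have d: "((\<lambda>y. poly P y / poly D y ^ n) has_real_derivative
     (poly (pderiv P) x * poly D x ^ n - poly P x * (of_nat n * (poly (pderiv D) x * poly D x ^ (n - Suc 0))))
      / (poly D x ^ n * poly D x ^ n)) (at x)"
    using assms by (intro DERIV_divide DERIV_power poly_DERIV) auto
  have e: "(poly (pderiv P) x * poly D x ^ n - poly P x * (of_nat n * (poly (pderiv D) x * poly D x ^ (n - Suc 0))))
      / (poly D x ^ n * poly D x ^ n) = poly (pderiv P * D - smult (of_nat n) (P * pderiv D)) x / poly D x ^ Suc n"
  proof (cases n)
    case 0 then show ?thesis using assms by (simp add: field_simps)
  next
    case (Suc k)
    then show ?thesis using assms by (simp add: field_simps power_Suc)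
  qed
  show ?thesis using d unfolding e .
qed

lemma rat_smooth:
  fixes P D :: "real poly" and f :: "real \<Rightarrow> real"
  assumes S: "open S" and D: "\<forall>x\<in>S. poly D x \<noteq> 0"
    and f: "\<forall>x\<in>S. f x = poly P x / poly D x ^ n"
  shows "smooth_on S f"
proof -
  have rep: "\<exists>P n. \<forall>x\<in>S. (deriv ^^ k) f x = poly P x / poly D x ^ n" for k
  proof (induction k)
    case 0 then show ?case using f by auto
  next
    case (Suc k)
    then obtain P n where h: "\<forall>x\<in>S. (deriv ^^ k) f x = poly P x / poly D x ^ n" by blast
    have "\<forall>x\<in>S. (deriv ^^ Suc k) f x = poly (pderiv P * D - smult (of_nat n) (P * pderiv D)) x / poly D x ^ Suc n"
    proof
      fix x assume x: "x \<in> S"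
      have ev: "eventually (\<lambda>y. (deriv ^^ k) f y = poly P y / poly D y ^ n) (nhds x)"
        using eventually_nhds_in_open[OF S x] by (rule eventually_mono) (use h in auto)
      have "(deriv ^^ Suc k) f x = deriv (\<lambda>y. poly P y / poly D y ^ n) x"
        by (simp add: deriv_cong_ev[OF ev refl])
      also have "\<dots> = poly (pderiv P * D - smult (of_nat n) (P * pderiv D)) x / poly D x ^ Suc n"
        using rat_deriv[of D x P n] D x by (intro DERIV_imp_deriv) auto
      finally show "(deriv ^^ Suc k) f x = poly (pderiv P * D - smult (of_nat n) (P * pderiv D)) x / poly D x ^ Suc n" .
    qed
    then show ?case by blast
  qed
  show ?thesis unfolding smooth_on_def
  proof (intro allI ballI)
    fix k x assume x: "x \<in> S"
    obtain P n where h: "\<forall>x\<in>S. (deriv ^^ k) f x = poly P x / poly D x ^ n" using rep by blast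
    have ev: "eventually (\<lambda>y. (deriv ^^ k) f y = poly P y / poly D y ^ n) (nhds x)"
      using eventually_nhds_in_open[OF S x] by (rule eventually_mono) (use h in auto)
    have "((deriv ^^ k) f has_real_derivative
       poly (pderiv P * D - smult (of_nat n) (P * pderiv D)) x / poly D x ^ Suc n) (at x)"
      using rat_deriv[of D x P n] D x DERIV_cong_ev[OF refl ev refl] by auto
    then show "(deriv ^^ k) f differentiable (at x)" unfolding real_differentiable_def by blast
  qed
qed



theorem mainTheorem1:
  fixes l a M rbm rm rp rbp \<omega> :: real and m :: int
  assumes "l > 0" and "M > 0"
    and "subextremal_roots l a M rbm rm rp rbp"
    and "superradiant l a rp rbp \<omega> m"
  shows "smooth_on {rp<..<rbp} (TT l a M \<omega> m)
    \<and> (\<exists>!r. r \<in> {rp<..<rbp} \<and> deriv (TT l a M \<omega> m) r = 0)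
    \<and> (\<forall>r\<in>{rp<..<rbp}. deriv (TT l a M \<omega> m) r = 0 \<longrightarrow>
          (\<forall>s\<in>{rp<..<rbp}. TT l a M \<omega> m r \<le> TT l a M \<omega> m s)
        \<and> (\<exists>!rs. rs \<in> {rp<..<rbp} \<and> \<omega> = a * real_of_int m * Xi l a / (rs^2 + a^2))
        \<and> \<omega> = a * real_of_int m * Xi l a / (r^2 + a^2)
        \<and> \<bar>deriv (deriv (TT l a M \<omega> m)) r\<bar> > 0)"
proof -
  have o: "rbm < 0" "0 \<le> rm" "rm < rp" "rp < rbp" and rootset: "{r. Delta l a M r = 0} = {rbm, rm, rp, rbp}"
    using assms(3) unfolding subextremal_roots_def by auto
  have z: "Delta l a M rbm = 0" "Delta l a M rm = 0" "Delta l a M rp = 0" "Delta l a M rbp = 0"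
    using rootset by blast+
  define S where "S = {rp<..<rbp}"
  define K where "K = a * real_of_int m * Xi l a"
  define up where "up = rp^2 + a^2"
  define ubp where "ubp = rbp^2 + a^2"
  have rp0: "rp > 0" using o by linarith
  have up0: "up > 0" unfolding up_def using rp0 by (simp add: add_pos_nonneg)
  have upl: "up < ubp" unfolding up_def ubp_def using o rp0 by (simp add: power_strict_mono)
  have sr: "(\<omega> - K/up) * (\<omega> - K/ubp) < 0"
    using assms(4) unfolding superradiant_def K_def up_def ubp_def by (simp add: ac_simps)
  have P: "(\<omega>*up - K)*(\<omega>*ubp - K) < 0"
  proof -
    have "(\<omega>*up - K)*(\<omega>*ubp - K) = ((\<omega> - K/up) * (\<omega> - K/ubp)) * (up*ubp)"
      using up0 upl by (simp add: field_simps)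
    moreover have "up*ubp > 0" using up0 upl by simp
    ultimately show ?thesis using sr by (simp add: mult_neg_pos)
  qed
  have w0: "\<omega> \<noteq> 0"
  proof
    assume "\<omega> = 0" then have "K*K < 0" using P by simp
    then show False by (metis not_square_less_zero)
  qed
  have between: "up < K/\<omega> \<and> K/\<omega> < ubp"
  proof (cases "\<omega> > 0")
    case True
    then have "\<omega>*up - K < \<omega>*ubp - K" using upl by simp
    then have "\<omega>*up - K < 0 \<and> 0 < \<omega>*ubp - K" using P by (smt (verit) mult_nonneg_nonneg mult_nonpos_nonpos)
    then show ?thesis using True by (simp add: pos_less_divide_eq pos_divide_less_eq mult.commute)
  next
    case False
    then have wn: "\<omega> < 0" using w0 by simp
    then have "\<omega>*ubp - K < \<omega>*up - K" using upl by simp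
    then have "\<omega>*ubp - K < 0 \<and> 0 < \<omega>*up - K" using P by (smt (verit) mult_nonneg_nonneg mult_nonpos_nonpos)
    then show ?thesis using wn by (simp add: neg_less_divide_eq neg_divide_less_eq mult.commute)
  qed
  define sg where "sg = K/\<omega> - a^2"
  have sg: "rp^2 < sg" "sg < rbp^2" using between unfolding sg_def up_def ubp_def by auto
  define rs where "rs = sqrt sg"
  have rs: "rp < rs" "rs < rbp"
    unfolding rs_def using sg rp0 o
    by (metis abs_of_nonneg less_le real_less_rsqrt real_sqrt_abs real_sqrt_less_mono order.strict_trans2 real_sqrt_abs)+

  have rp2: "rp^2 > 0" using rp0 by simp
  have rs0: "rs > 0" using rs rp0 by linarith
  have sg0: "sg \<ge> 0" using sg(1) rp2 by linarith
  have rs2: "rs^2 = sg" unfolding rs_def using sg0 by simp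
  have S_open: "open S" unfolding S_def by simp
  have rsS: "rs \<in> S" unfolding S_def using rs by simp
  have fac: "Delta l a M x = (x-rbm)*(x-rm)*(x-rp)*(rbp-x)/l^2" for x
    using Delta_factor[of l rbm rm rp rbp a M x] assms(1) o z by linarith
  define q where "q = (\<lambda>x::real. (x-rbm)*(x-rm)*(x-rp)*(rbp-x))"
  define qd where "qd = (\<lambda>x::real. (x-rm)*(x-rp)*(rbp-x) + (x-rbm)*(x-rp)*(rbp-x) + (x-rbm)*(x-rm)*(rbp-x) - (x-rbm)*(x-rm)*(x-rp))"
  have Deq: "Delta l a M = (\<lambda>x. q x / l^2)" using fac by (auto simp: q_def)
  have Dder: "(Delta l a M has_real_derivative qd x / l^2) (at x)" for x
  proof -
    have "(q has_real_derivative qd x) (at x)"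
      unfolding q_def qd_def by (auto intro!: derivative_eq_intros simp: algebra_simps)
    then show ?thesis unfolding Deq by (rule DERIV_cdivide)
  qed
  have Dpos: "Delta l a M x > 0" if "x \<in> S" for x
  proof -
    have "q x > 0" using that o unfolding q_def S_def by simp
    then show ?thesis unfolding Deq using assms(1) by simp
  qed
  define g where "g = (\<lambda>y::real. \<omega>*(y^2+a^2) - K)"
  have gs: "g y = \<omega>*(y^2 - sg)" for y
    unfolding g_def sg_def using w0 by (simp add: field_simps)
  have gder: "(g has_real_derivative 2*\<omega>*y) (at y)" for y
    unfolding g_def by (auto intro!: derivative_eq_intros)
  have Tform: "TT l a M \<omega> m y = g y^2 / Delta l a M y" if "y \<in> S" for y
  proof -
    have u: "y^2 + a^2 > 0" using that rp0 unfolding S_def by (simp add: add_pos_nonneg)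
    have "(y^2+a^2)^2 * (\<omega> - K/(y^2+a^2))^2 = (\<omega>*(y^2+a^2) - K)^2"
    proof -
      define uu where "uu = y^2+a^2"
      have uu: "uu \<noteq> 0" using u unfolding uu_def by linarith
      have "\<omega> - K/uu = (\<omega>*uu - K)/uu" using uu by (simp add: field_simps)
      then have "uu^2 * (\<omega> - K/uu)^2 = (\<omega>*uu - K)^2" using uu by (simp add: power_divide)
      then show ?thesis unfolding uu_def .
    qed
    then show ?thesis unfolding TT_def g_def K_def by (simp add: ac_simps)
  qed
  define H where "H = (\<lambda>y. (4*\<omega>*y*Delta l a M y - g y * (qd y / l^2)) / (Delta l a M y)^2)"
  have Tder: "((\<lambda>y. g y^2 / Delta l a M y) has_real_derivative g y * H y) (at y)" if "y \<in> S" for y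
  proof -
    have d: "((\<lambda>y. g y^2 / Delta l a M y) has_real_derivative
       (of_nat 2 * (2*\<omega>*y * g y ^ (2 - Suc 0)) * Delta l a M y - g y^2 * (qd y / l^2)) / (Delta l a M y * Delta l a M y)) (at y)"
      using Dpos[OF that] by (intro DERIV_divide DERIV_power gder Dder) auto
    have "(of_nat 2 * (2*\<omega>*y * g y ^ (2 - Suc 0)) * Delta l a M y - g y^2 * (qd y / l^2)) / (Delta l a M y * Delta l a M y) = g y * H y"
      unfolding H_def by (simp add: field_simps power2_eq_square)
    with d show ?thesis by simp
  qed
  have dT: "deriv (TT l a M \<omega> m) y = g y * H y" if "y \<in> S" for y
  proof -
    have ev: "eventually (\<lambda>y. TT l a M \<omega> m y = g y^2 / Delta l a M y) (nhds y)"
      using eventually_nhds_in_open[OF S_open that] by (rule eventually_mono) (use Tform in auto)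
    show ?thesis unfolding deriv_cong_ev[OF ev refl] by (rule DERIV_imp_deriv[OF Tder[OF that]])
  qed
  have Hne: "H y \<noteq> 0" if "y \<in> S" for y
  proof -
    have k: "4*y*q y - (y^2-sg)*qd y > 0"
      using that unfolding S_def q_def qd_def using kpos[of rbm rm rp y rbp sg] o sg by simp
    have ab: "4*\<omega>*y*(Q/l^2) - \<omega>*(y^2-sg)*(QD/l^2) = \<omega>*(4*y*Q - (y^2-sg)*QD)/l^2" for Q QD
      using assms(1) by (simp add: field_simps)
    have "4*\<omega>*y*Delta l a M y - g y * (qd y / l^2) = \<omega>*(4*y*q y - (y^2-sg)*qd y)/l^2"
      unfolding Deq gs using ab[of "q y" "qd y"] by (simp add: mult.assoc)
    moreover have "\<omega>*(4*y*q y - (y^2-sg)*qd y)/l^2 \<noteq> 0" using k w0 assms(1) by simp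
    ultimately show ?thesis unfolding H_def using Dpos[OF that] by simp
  qed
  have crit: "deriv (TT l a M \<omega> m) y = 0 \<longleftrightarrow> y = rs" if "y \<in> S" for y
  proof -
    have y0: "y > 0" using that rp0 unfolding S_def by simp
    have "deriv (TT l a M \<omega> m) y = 0 \<longleftrightarrow> g y = 0" using dT[OF that] Hne[OF that] by simp
    also have "\<dots> \<longleftrightarrow> y^2 = rs^2" unfolding gs rs2 using w0 by simp
    also have "\<dots> \<longleftrightarrow> y = rs" using y0 rs0 by (simp add: power2_eq_iff_nonneg)
    finally show ?thesis .
  qed
  have grs: "g rs = 0" unfolding gs rs2 by simp
  have Hrs: "H rs = 4*\<omega>*rs / Delta l a M rs" unfolding H_def grs using Dpos[OF rsS] by (simp add: power2_eq_square)
  have Ddiff: "Delta l a M differentiable (at x)" for x using Dder real_differentiable_def by blast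
  have gdiff: "g differentiable (at x)" for x using gder real_differentiable_def by blast
  have "H differentiable (at rs)"
    unfolding H_def qd_def using Dpos[OF rsS] assms(1) by (intro derivative_intros Ddiff gdiff) auto
  then obtain H' where H': "(H has_real_derivative H') (at rs)" by (auto simp: real_differentiable_def)
  have d2: "deriv (deriv (TT l a M \<omega> m)) rs = 2*\<omega>*rs * H rs"
  proof -
    have ev: "eventually (\<lambda>y. deriv (TT l a M \<omega> m) y = g y * H y) (nhds rs)"
      using eventually_nhds_in_open[OF S_open rsS] by (rule eventually_mono) (use dT in auto)
    have "((\<lambda>y. g y * H y) has_real_derivative 2*\<omega>*rs * H rs + g rs * H') (at rs)"
      using DERIV_mult[OF gder H'] by (simp add: algebra_simps)
    then show ?thesis unfolding deriv_cong_ev[OF ev refl] grs by (intro DERIV_imp_deriv) simp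
  qed
  have d2pos: "deriv (deriv (TT l a M \<omega> m)) rs > 0"
  proof -
    have e: "2*\<omega>*rs*(4*\<omega>*rs/Delta l a M rs) = 8*(\<omega>*rs)^2/Delta l a M rs"
      by (simp add: power2_eq_square)
    have "(\<omega>*rs)^2 > 0" using w0 rs0 by simp
    then show ?thesis unfolding d2 Hrs e using Dpos[OF rsS] by simp
  qed

  define DP where "DP = [:a^2, -2*M, 1 - a^2/l^2, 0, -1/l^2:]"
  define GP where "GP = [:\<omega>*a^2 - K, 0, \<omega>:]"
  have pD: "poly DP x = Delta l a M x" for x
    unfolding DP_def Delta_def using assms(1) by (simp add: field_simps power2_eq_square)
  have pG: "poly GP x = g x" for x
    unfolding GP_def g_def by (simp add: algebra_simps power2_eq_square)
  have smooth: "smooth_on S (TT l a M \<omega> m)"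
  proof (rule rat_smooth[where D=DP and P="GP^2" and n=1])
    show "open S" by (rule S_open)
    show "\<forall>x\<in>S. poly DP x \<noteq> 0" using Dpos pD by (metis less_irrefl)
    show "\<forall>x\<in>S. TT l a M \<omega> m x = poly (GP^2) x / poly DP x ^ 1"
      using Tform pD pG by simp
  qed
  have Kpos: "K/\<omega> > 0" using between up0 by linarith
  have Kn0: "K \<noteq> 0" using Kpos by auto
  have wsol: "\<omega> = K/(x^2+a^2) \<longleftrightarrow> x = rs" if "x \<in> S" for x
  proof -
    have x0: "x > 0" using that rp0 unfolding S_def by simp
    have u: "x^2+a^2 > 0" using x0 by (simp add: add_pos_nonneg)
    have "\<omega> = K/(x^2+a^2) \<longleftrightarrow> \<omega>*(x^2+a^2) = K" using nonzero_eq_divide_eq[of "x^2+a^2" \<omega> K] u by linarith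
    also have "\<dots> \<longleftrightarrow> g x = 0" unfolding g_def by simp
    also have "\<dots> \<longleftrightarrow> x^2 = rs^2" unfolding gs rs2 using w0 by simp
    also have "\<dots> \<longleftrightarrow> x = rs" using x0 rs0 by (simp add: power2_eq_iff_nonneg)
    finally show ?thesis .
  qed
  have Tnn: "TT l a M \<omega> m y \<ge> 0" if "y \<in> S" for y
    using Tform[OF that] Dpos[OF that] by simp
  have Trs: "TT l a M \<omega> m rs = 0" using Tform[OF rsS] grs by simp
  have main: "smooth_on S (TT l a M \<omega> m)
    \<and> (\<exists>!r. r \<in> S \<and> deriv (TT l a M \<omega> m) r = 0)
    \<and> (\<forall>r\<in>S. deriv (TT l a M \<omega> m) r = 0 \<longrightarrow>
          (\<forall>s\<in>S. TT l a M \<omega> m r \<le> TT l a M \<omega> m s)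
        \<and> (\<exists>!rs. rs \<in> S \<and> \<omega> = K / (rs^2 + a^2))
        \<and> \<omega> = K / (r^2 + a^2)
        \<and> \<bar>deriv (deriv (TT l a M \<omega> m)) r\<bar> > 0)"
  proof (intro conjI ballI impI)
    show "smooth_on S (TT l a M \<omega> m)" by (rule smooth)
    show "\<exists>!r. r \<in> S \<and> deriv (TT l a M \<omega> m) r = 0"
      using rsS crit by blast
    show "\<exists>!rs. rs \<in> S \<and> \<omega> = K / (rs^2 + a^2)"
      using rsS wsol by blast
  next
    fix r assume r: "r \<in> S" "deriv (TT l a M \<omega> m) r = 0"
    then have rr: "r = rs" using crit by blast
    show "\<omega> = K / (r^2 + a^2)" using wsol[OF r(1)] rr by simp
    show "\<bar>deriv (deriv (TT l a M \<omega> m)) r\<bar> > 0" using d2pos rr by simp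
    fix s assume "s \<in> S"
    then show "TT l a M \<omega> m r \<le> TT l a M \<omega> m s" using Tnn Trs rr by simp
  qed
  then show ?thesis unfolding S_def K_def .
qed

end
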